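(* Let $n\ge 1$ be odd. Consider the generalized $n$-gene repressilator system $$\dot r_i = a_i(p_{i-1}) - d_{r_i}(r_i),\qquad \dot p_i = k_i(r_i) - d_{p_i}(p_i),\qquad i=1,\dots,n,$$ (indices mod $n$, so $p_0=p_n$), where the functions satisfy the standing assumptions described in the context. Suppose that for every $i=1,\dots,n$, $$\delta_i^R > a_i(0)\quad\text{and}\quad \delta_i^P > k_i\big(d_{r_i}^{-1}(a_i(0))\big),$$ where $\delta_i^R:=\lim_{x\to\infty} d_{r_i}(x)$ and $\delta_i^P:=\lim_{x\to\infty} d_{p_i}(x)$ (these limits may be $+\infty$). Then the system has a unique steady state in $(0,\infty)^{2n}$.
   Context: Standing assumptions: each transcription-rate function $a_i:[0,\infty)\to\mathbb{R}$ is $C^1$, satisfies $a_i([0,\infty))\subset[0,\infty)$, is strictly decreasing on $[0,\infty)$, and has $a_i(0)>0$. Each degradation-rate function $d_{r_i}, d_{p_i}$ and each translation-rate function $k_i$ is a $C^1$ function $[0,\infty)\to\mathbb{R}$ that vanishes at $0$ and is strictly increasing on $(0,\infty)$; in particular these are invertible on their ranges. Here $r_i$ is the concentration of mRNA-$i$ and $p_i$ that of protein-$i$. *)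

theory Defs
  imports "HOL-Analysis.Analysis"
begin

definition C1_nonneg :: "(real \<Rightarrow> real) \<Rightarrow> bool" where
  "C1_nonneg f \<longleftrightarrow> (\<exists>f'. continuous_on {0..} f' \<and>
      (\<forall>x\<ge>0. (f has_real_derivative f' x) (at x within {0..})))"

definition transcription_fun :: "(real \<Rightarrow> real) \<Rightarrow> bool" where
  "transcription_fun f \<longleftrightarrow> C1_nonneg f \<and> (\<forall>x\<ge>0. f x \<ge> 0) \<and>
      (\<forall>x y. 0 \<le> x \<longrightarrow> x < y \<longrightarrow> f y < f x) \<and> f 0 > 0"

definition rate_fun :: "(real \<Rightarrow> real) \<Rightarrow> bool" where
  "rate_fun f \<longleftrightarrow> C1_nonneg f \<and> f 0 = 0 \<and>
      (\<forall>x y. 0 < x \<longrightarrow> x < y \<longrightarrow> f x < f y)"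

text \<open>Steady state of the n-gene repressilator in (0,oo)^(2n); indices 0..n-1,
  the predecessor of i is (i + n - 1) mod n.\<close>
definition repressilator_steady_state ::
  "nat \<Rightarrow> (nat \<Rightarrow> real \<Rightarrow> real) \<Rightarrow> (nat \<Rightarrow> real \<Rightarrow> real) \<Rightarrow> (nat \<Rightarrow> real \<Rightarrow> real)
   \<Rightarrow> (nat \<Rightarrow> real \<Rightarrow> real) \<Rightarrow> (nat \<Rightarrow> real) \<Rightarrow> (nat \<Rightarrow> real) \<Rightarrow> bool" where
  "repressilator_steady_state n a dr k dp r p \<longleftrightarrow>
     (\<forall>i<n. r i > 0 \<and> p i > 0 \<and>
        a i (p ((i + n - 1) mod n)) - dr i (r i) = 0 \<and>
        k i (r i) - dp i (p i) = 0)"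

end

theory Submission
  imports Defs
begin

lemma C1_cont: "C1_nonneg f \<Longrightarrow> continuous_on {0..} f"
  unfolding C1_nonneg_def
  by (auto simp: continuous_on_eq_continuous_within intro: DERIV_continuous)

lemma rate_nonneg:
  assumes "rate_fun f" "0 < x" shows "0 < f x"
proof (rule ccontr)
  assume "\<not> 0 < f x"
  hence fx: "f x \<le> 0" by simp
  have c: "continuous_on {0..x} f" using C1_cont assms(1) unfolding rate_fun_def
    by (meson atLeastAtMost_iff atLeast_iff continuous_on_subset subsetI)
  have f0: "f 0 = 0" using assms(1) unfolding rate_fun_def by simp
  have "f (x/2) < f x" using assms unfolding rate_fun_def by auto
  hence lt: "f (x/2) < 0" using fx by simp
  obtain t where t: "0 \<le> t" "t \<le> x/2" "f t = f (x/2) / 2"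
    using IVT2'[of f "x/2" "f (x/2) / 2" 0] lt f0 assms(2)
      continuous_on_subset[OF c, of "{0..x/2}"] by auto
  have "t \<noteq> 0" using t f0 lt by auto
  hence "0 < t" using t by simp
  have "t \<noteq> x/2" using t lt by auto
  hence "t < x/2" using t by simp
  hence "f t < f (x/2)" using \<open>0 < t\<close> assms(1) unfolding rate_fun_def by auto
  thus False using t lt by simp
qed

lemma rate_strict:
  assumes "rate_fun f" "0 \<le> x" "x < y" shows "f x < f y"
proof (cases "x = 0")
  case True
  then show ?thesis using rate_nonneg[OF assms(1), of y] assms unfolding rate_fun_def by auto
next
  case False
  then show ?thesis using assms unfolding rate_fun_def by auto
qed

lemma rate_inj: "rate_fun f \<Longrightarrow> inj_on f {0..}"
  unfolding inj_on_def
  by (metis atLeast_iff linorder_neqE_linordered_idom order_less_irrefl rate_strict)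

lemma rate_inv:
  fixes f :: "real \<Rightarrow> real"
  assumes rf: "rate_fun f" and lim: "((\<lambda>x. ereal (f x)) \<longlongrightarrow> \<delta>) at_top"
    and dc: "\<delta> > ereal c"
  defines "g \<equiv> the_inv_into {0..} f"
  shows "\<forall>v\<in>{0..c}. 0 \<le> g v \<and> f (g v) = v"
    and "\<forall>v. 0 < v \<longrightarrow> v \<le> c \<longrightarrow> 0 < g v"
    and "\<forall>u v. 0 \<le> u \<longrightarrow> u < v \<longrightarrow> v \<le> c \<longrightarrow> g u < g v"
    and "continuous_on {0..c} g"
proof -
  have "\<forall>\<^sub>F x in at_top. ereal (f x) > ereal c"
    using order_tendstoD(1)[OF lim dc] by simp
  then obtain R0 where R0: "\<And>x. x \<ge> R0 \<Longrightarrow> f x > c"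
    by (auto simp: eventually_at_top_linorder)
  define R where "R = max R0 0"
  have R: "0 \<le> R" "f R > c" using R0[of R] by (auto simp: R_def)
  have cf: "continuous_on {0..} f" using C1_cont rf unfolding rate_fun_def by simp
  have cR: "continuous_on {0..R} f" using continuous_on_subset[OF cf] by auto
  have f0: "f 0 = 0" using rf unfolding rate_fun_def by simp
  have inj: "inj_on f {0..}" by (rule rate_inj[OF rf])
  have surj: "v \<in> f ` {0..R}" if "v \<in> {0..c}" for v
  proof -
    have "0 \<le> v" "v \<le> f R" using that R by auto
    then obtain x where "0 \<le> x" "x \<le> R" "f x = v"
      using IVT'[of f 0 v R] R f0 cR by auto
    thus ?thesis by auto
  qed
  have gv: "0 \<le> g v \<and> f (g v) = v" if vc: "v \<in> {0..c}" for v
  proof -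
    obtain x where x: "x \<in> {0..R}" "f x = v" using surj[OF vc] by auto
    have "g v = x" unfolding g_def using x inj by (intro the_inv_into_f_eq) auto
    thus ?thesis using x by auto
  qed
  thus A: "\<forall>v\<in>{0..c}. 0 \<le> g v \<and> f (g v) = v" by blast
  show "\<forall>v. 0 < v \<longrightarrow> v \<le> c \<longrightarrow> 0 < g v"
  proof (intro allI impI)
    fix v :: real assume "0 < v" "v \<le> c"
    hence "0 \<le> g v" "f (g v) = v" using gv by auto
    thus "0 < g v" using f0 \<open>0 < v\<close> by (cases "g v = 0") auto
  qed
  show "\<forall>u v. 0 \<le> u \<longrightarrow> u < v \<longrightarrow> v \<le> c \<longrightarrow> g u < g v"
  proof (intro allI impI)
    fix u v :: real assume "0 \<le> u" "u < v" "v \<le> c"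
    hence a: "0 \<le> g u" "f (g u) = u" "0 \<le> g v" "f (g v) = v" using gv by auto
    show "g u < g v"
    proof (rule ccontr)
      assume "\<not> g u < g v"
      hence "g v \<le> g u" by simp
      hence "f (g v) \<le> f (g u)" using rate_strict[OF rf a(3), of "g u"] by (cases "g v = g u") auto
      thus False using a \<open>u < v\<close> by simp
    qed
  qed
  have "continuous_on (f ` {0..R}) g"
    by (rule continuous_on_inv[OF cR]) (use inj in \<open>auto simp: g_def intro!: the_inv_into_f_f\<close>)
  moreover have "{0..c} \<subseteq> f ` {0..R}" using surj by auto
  ultimately show "continuous_on {0..c} g" using continuous_on_subset by blast
qed

lemma F_lemma:
  fixes a dr dp k :: "real \<Rightarrow> real"
  assumes ta: "transcription_fun a" and rdr: "rate_fun dr" and rdp: "rate_fun dp"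
    and rk: "rate_fun k"
    and hR: "\<exists>\<delta>::ereal. ((\<lambda>x. ereal (dr x)) \<longlongrightarrow> \<delta>) at_top \<and> \<delta> > ereal (a 0)"
    and hP: "\<exists>\<delta>::ereal. ((\<lambda>x. ereal (dp x)) \<longlongrightarrow> \<delta>) at_top \<and>
               \<delta> > ereal (k (the_inv_into {0..} dr (a 0)))"
  defines "Rr \<equiv> the_inv_into {0..} dr"
  defines "F \<equiv> (\<lambda>x. the_inv_into {0..} dp (k (Rr (a x))))"
  shows "\<forall>x\<ge>0. 0 < F x"
    and "\<forall>x y. 0 \<le> x \<longrightarrow> x < y \<longrightarrow> F y < F x"
    and "continuous_on {0..} F"
    and "\<forall>x\<ge>0. 0 < Rr (a x) \<and> dr (Rr (a x)) = a x \<and> dp (F x) = k (Rr (a x))"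
    and "\<forall>x r q. 0 \<le> x \<longrightarrow> 0 < r \<longrightarrow> 0 < q \<longrightarrow> dr r = a x \<longrightarrow> dp q = k r
           \<longrightarrow> r = Rr (a x) \<and> q = F x"
proof -
  define Pp where "Pp = the_inv_into {0..} dp"
  have Fdef: "F x = Pp (k (Rr (a x)))" for x by (simp add: F_def Pp_def)
  define K where "K = k (Rr (a 0))"
  obtain \<delta>R where dR: "((\<lambda>x. ereal (dr x)) \<longlongrightarrow> \<delta>R) at_top" "\<delta>R > ereal (a 0)" using hR by blast
  obtain \<delta>P where dP: "((\<lambda>x. ereal (dp x)) \<longlongrightarrow> \<delta>P) at_top" "\<delta>P > ereal K"
    using hP by (auto simp: K_def Rr_def)
  note R = rate_inv[OF rdr dR, folded Rr_def]
  note P = rate_inv[OF rdp dP, folded Pp_def]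
  have a0: "0 < a 0" and ad: "\<And>x y. 0 \<le> x \<Longrightarrow> x < y \<Longrightarrow> a y < a x"
    and an: "\<And>x. 0 \<le> x \<Longrightarrow> 0 \<le> a x"
    using ta unfolding transcription_fun_def by auto
  have apos: "0 < a x" if "0 \<le> x" for x
    using ad[of x "x+1"] an[of "x+1"] that by auto
  have ale: "a x \<le> a 0" if "0 \<le> x" for x
    using ad[of 0 x] that by (cases "x = 0") auto
  have ca: "continuous_on {0..} a" using C1_cont ta unfolding transcription_fun_def by simp
  have ck: "continuous_on {0..} k" using C1_cont rk unfolding rate_fun_def by simp
  have R1: "0 < Rr (a x) \<and> dr (Rr (a x)) = a x \<and> Rr (a x) \<le> Rr (a 0)" if "0 \<le> x" for x
  proof -
    have "0 < Rr (a x)" using R(2) apos[OF that] ale[OF that] by auto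
    moreover have "dr (Rr (a x)) = a x" using R(1) apos[OF that] ale[OF that] by auto
    moreover have "Rr (a x) \<le> Rr (a 0)"
      using R(3) apos[OF that] ale[OF that] by (cases "a x = a 0") (auto intro: less_imp_le)
    ultimately show ?thesis by blast
  qed
  have K1: "0 < k (Rr (a x)) \<and> k (Rr (a x)) \<le> K" if "0 \<le> x" for x
  proof -
    have "0 < k (Rr (a x))" using rate_nonneg[OF rk] R1[OF that] by auto
    moreover have "k (Rr (a x)) \<le> K" unfolding K_def
      using rate_strict[OF rk, of "Rr (a x)" "Rr (a 0)"] R1[OF that]
      by (cases "Rr (a x) = Rr (a 0)") auto
    ultimately show ?thesis by blast
  qed
  show "\<forall>x\<ge>0. 0 < F x" using P(2) K1 by (auto simp: Fdef)
  show "\<forall>x y. 0 \<le> x \<longrightarrow> x < y \<longrightarrow> F y < F x"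
  proof (intro allI impI)
    fix x y :: real assume xy: "0 \<le> x" "x < y"
    have "a y < a x" using ad xy by auto
    hence "Rr (a y) < Rr (a x)" using R(3) apos[of y] ale[of x] xy by auto
    hence "k (Rr (a y)) < k (Rr (a x))" using rate_strict[OF rk] R1[of y] xy by auto
    thus "F y < F x" unfolding Fdef using P(3) K1[of x] K1[of y] xy by auto
  qed
  show "continuous_on {0..} F"
  proof -
    have c1: "continuous_on {0..} (\<lambda>x. Rr (a x))"
      by (rule continuous_on_compose2[OF R(4) ca]) (use an ale in auto)
    have c2: "continuous_on {0..} (\<lambda>x. k (Rr (a x)))"
      by (rule continuous_on_compose2[OF ck c1]) (use R1 in \<open>force\<close>)
    have c3: "continuous_on {0..} (\<lambda>x. Pp (k (Rr (a x))))"
      by (rule continuous_on_compose2[OF P(4) c2]) (use K1 in \<open>force\<close>)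
    show ?thesis using c3 by (simp add: Fdef[abs_def])
  qed
  show "\<forall>x\<ge>0. 0 < Rr (a x) \<and> dr (Rr (a x)) = a x \<and> dp (F x) = k (Rr (a x))"
  proof (intro allI impI)
    fix x :: real assume "0 \<le> x"
    hence "k (Rr (a x)) \<in> {0..K}" using K1[of x] by auto
    thus "0 < Rr (a x) \<and> dr (Rr (a x)) = a x \<and> dp (F x) = k (Rr (a x))"
      using R1[OF \<open>0 \<le> x\<close>] P(1) by (simp add: Fdef)
  qed
  show "\<forall>x r q. 0 \<le> x \<longrightarrow> 0 < r \<longrightarrow> 0 < q \<longrightarrow> dr r = a x \<longrightarrow> dp q = k r
           \<longrightarrow> r = Rr (a x) \<and> q = F x"
  proof (intro allI impI)
    fix x r q :: real assume h: "0 \<le> x" "0 < r" "0 < q" "dr r = a x" "dp q = k r"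
    have r: "r = Rr (a x)" unfolding Rr_def
      using h rate_inj[OF rdr] by (intro the_inv_into_f_eq[symmetric]) auto
    have "q = F x" unfolding F_def
      using h rate_inj[OF rdp] r by (intro the_inv_into_f_eq[symmetric]) auto
    thus "r = Rr (a x) \<and> q = F x" using r by simp
  qed
qed

primrec iterF :: "(nat \<Rightarrow> real \<Rightarrow> real) \<Rightarrow> nat \<Rightarrow> real \<Rightarrow> real" where
  "iterF F 0 x = x"
| "iterF F (Suc m) x = F m (iterF F m x)"

lemma iterF_props:
  assumes pos: "\<And>i x. i < n \<Longrightarrow> 0 \<le> x \<Longrightarrow> 0 < F i x"
    and dec: "\<And>i x y. i < n \<Longrightarrow> 0 \<le> x \<Longrightarrow> x < y \<Longrightarrow> F i y < F i x"
    and cont: "\<And>i. i < n \<Longrightarrow> continuous_on {0..} (F i)"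
    and "m \<le> n"
  shows "(\<forall>x\<ge>0. 0 \<le> iterF F m x) \<and> continuous_on {0..} (iterF F m) \<and>
         (\<forall>x y. 0 \<le> x \<longrightarrow> x < y \<longrightarrow>
            (if even m then iterF F m x < iterF F m y else iterF F m y < iterF F m x))"
  using assms(4)
proof (induction m)
  case 0
  then show ?case by (simp add: continuous_on_id)
next
  case (Suc m)
  hence IH: "\<forall>x\<ge>0. 0 \<le> iterF F m x" "continuous_on {0..} (iterF F m)"
    "\<forall>x y. 0 \<le> x \<longrightarrow> x < y \<longrightarrow>
            (if even m then iterF F m x < iterF F m y else iterF F m y < iterF F m x)"
    and mn: "m < n" by auto
  have "\<forall>x\<ge>0. 0 \<le> iterF F (Suc m) x" using pos[OF mn] IH(1) by (simp add: less_imp_le)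
  moreover have "continuous_on {0..} (iterF F (Suc m))"
  proof -
    have "continuous_on {0..} (\<lambda>x. F m (iterF F m x))"
      by (rule continuous_on_compose2[OF cont[OF mn] IH(2)]) (use IH(1) in auto)
    thus ?thesis by (simp add: iterF.simps(2)[abs_def])
  qed
  moreover have "\<forall>x y. 0 \<le> x \<longrightarrow> x < y \<longrightarrow>
     (if even (Suc m) then iterF F (Suc m) x < iterF F (Suc m) y
      else iterF F (Suc m) y < iterF F (Suc m) x)"
  proof (intro allI impI)
    fix x y :: real assume xy: "0 \<le> x" "x < y"
    have y0: "0 \<le> y" using xy by simp
    show "if even (Suc m) then iterF F (Suc m) x < iterF F (Suc m) y
      else iterF F (Suc m) y < iterF F (Suc m) x"
    proof (cases "even m")
      case True
      hence "iterF F m x < iterF F m y" using IH(3) xy by auto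
      hence "F m (iterF F m y) < F m (iterF F m x)" using dec[OF mn] IH(1) xy by auto
      thus ?thesis using True by simp
    next
      case False
      hence "iterF F m y < iterF F m x" using IH(3) xy by auto
      hence "F m (iterF F m x) < F m (iterF F m y)" using dec[OF mn] IH(1) y0 by auto
      thus ?thesis using False by simp
    qed
  qed
  ultimately show ?case by blast
qed

theorem proposition1:
  fixes n :: nat
    and a dr dp k :: "nat \<Rightarrow> real \<Rightarrow> real"
  assumes n_odd: "odd n"
    and a_ok: "\<And>i. i < n \<Longrightarrow> transcription_fun (a i)"
    and dr_ok: "\<And>i. i < n \<Longrightarrow> rate_fun (dr i)"
    and dp_ok: "\<And>i. i < n \<Longrightarrow> rate_fun (dp i)"
    and k_ok: "\<And>i. i < n \<Longrightarrow> rate_fun (k i)"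
    and hR: "\<And>i. i < n \<Longrightarrow> \<exists>\<delta>::ereal.
               ((\<lambda>x. ereal (dr i x)) \<longlongrightarrow> \<delta>) at_top \<and> \<delta> > ereal (a i 0)"
    and hP: "\<And>i. i < n \<Longrightarrow> \<exists>\<delta>::ereal.
               ((\<lambda>x. ereal (dp i x)) \<longlongrightarrow> \<delta>) at_top \<and>
               \<delta> > ereal (k i (the_inv_into {0..} (dr i) (a i 0)))"
  shows "(\<exists>r p. repressilator_steady_state n a dr k dp r p) \<and>
         (\<forall>r p r' p'. repressilator_steady_state n a dr k dp r p \<longrightarrow>
             repressilator_steady_state n a dr k dp r' p' \<longrightarrow>
             (\<forall>i<n. r i = r' i \<and> p i = p' i))"
proof -
  define Rr where "Rr = (\<lambda>i. the_inv_into {0..} (dr i))"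
  define F where "F = (\<lambda>i x. the_inv_into {0..} (dp i) (k i (Rr i (a i x))))"
  have Fpos: "\<And>i x. i < n \<Longrightarrow> 0 \<le> x \<Longrightarrow> 0 < F i x"
  proof -
    fix i :: nat and x :: real assume i: "i < n" and x: "0 \<le> x"
    show "0 < F i x" unfolding F_def Rr_def
      using F_lemma(1)[OF a_ok[OF i] dr_ok[OF i] dp_ok[OF i] k_ok[OF i] hR[OF i] hP[OF i]] x
      by blast
  qed
  have Fdec: "\<And>i x y. i < n \<Longrightarrow> 0 \<le> x \<Longrightarrow> x < y \<Longrightarrow> F i y < F i x"
  proof -
    fix i :: nat and x y :: real assume i: "i < n" and x: "0 \<le> x" "x < y"
    show "F i y < F i x" unfolding F_def Rr_def
      using F_lemma(2)[OF a_ok[OF i] dr_ok[OF i] dp_ok[OF i] k_ok[OF i] hR[OF i] hP[OF i]] x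
      by blast
  qed
  have Fcont: "\<And>i. i < n \<Longrightarrow> continuous_on {0..} (F i)"
  proof -
    fix i :: nat assume i: "i < n"
    have e: "F i = (\<lambda>x. the_inv_into {0..} (dp i) (k i (the_inv_into {0..} (dr i) (a i x))))"
      by (simp add: F_def Rr_def)
    show "continuous_on {0..} (F i)" unfolding e
      by (rule F_lemma(3)[OF a_ok[OF i] dr_ok[OF i] dp_ok[OF i] k_ok[OF i] hR[OF i] hP[OF i]])
  qed
  have Fsol: "\<And>i x. i < n \<Longrightarrow> 0 \<le> x \<Longrightarrow>
       0 < Rr i (a i x) \<and> dr i (Rr i (a i x)) = a i x \<and> dp i (F i x) = k i (Rr i (a i x))"
  proof -
    fix i :: nat and x :: real assume i: "i < n" and x: "0 \<le> x"
    show "0 < Rr i (a i x) \<and> dr i (Rr i (a i x)) = a i x \<and> dp i (F i x) = k i (Rr i (a i x))"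
      unfolding F_def Rr_def
      using F_lemma(4)[OF a_ok[OF i] dr_ok[OF i] dp_ok[OF i] k_ok[OF i] hR[OF i] hP[OF i]] x
      by blast
  qed
  have Funiq: "\<And>i x r q. i < n \<Longrightarrow> 0 \<le> x \<Longrightarrow> 0 < r \<Longrightarrow> 0 < q \<Longrightarrow> dr i r = a i x
       \<Longrightarrow> dp i q = k i r \<Longrightarrow> r = Rr i (a i x) \<and> q = F i x"
  proof -
    fix i :: nat and x r q :: real assume i: "i < n" and h: "0 \<le> x" "0 < r" "0 < q" "dr i r = a i x" "dp i q = k i r"
    show "r = Rr i (a i x) \<and> q = F i x"
      unfolding F_def Rr_def
      using F_lemma(5)[OF a_ok[OF i] dr_ok[OF i] dp_ok[OF i] k_ok[OF i] hR[OF i] hP[OF i]] h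
      by blast
  qed
  note IT = iterF_props[where F=F and n=n, OF Fpos Fdec Fcont, simplified]
  have n1: "n \<ge> 1" using n_odd by (cases n) auto
  define G where "G = iterF F n"
  have Gnn: "\<forall>x\<ge>0. 0 \<le> G x" and Gc: "continuous_on {0..} G"
    and Gdec: "\<And>x y. 0 \<le> x \<Longrightarrow> x < y \<Longrightarrow> G y < G x"
    using IT[of n] n_odd by (auto simp: G_def)
  have Gfix_uniq: "x = y" if "0 \<le> x" "0 \<le> y" "G x = x" "G y = y" for x y
    using Gdec[of x y] Gdec[of y x] that by (cases x y rule: linorder_cases) auto
  have pred: "(j + n - 1) mod n = (if j = 0 then n - 1 else j - 1)" if "j < n" for j
  proof (cases "j = 0")
    case True then show ?thesis using n1 by simp
  next
    case False
    hence "j + n - 1 = (j - 1) + n" using that by simp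
    hence "(j + n - 1) mod n = ((j - 1) + n) mod n" by (simp only:)
    also have "\<dots> = (j - 1) mod n" by (rule mod_add_self2)
    also have "\<dots> = j - 1" using that by simp
    finally show ?thesis using False by simp
  qed
  have ex: "\<exists>r p. repressilator_steady_state n a dr k dp r p"
  proof -
    define c where "c = G 0"
    have c0: "0 \<le> c" using Gnn by (simp add: c_def)
    have "G c \<le> G 0" using Gdec[of 0 c] c0 by (cases "c = 0") auto
    hence "(\<lambda>x. x - G x) 0 \<le> 0" "0 \<le> (\<lambda>x. x - G x) c" using c0 by (auto simp: c_def)
    moreover have "continuous_on {0..c} (\<lambda>x. x - G x)"
      by (intro continuous_intros continuous_on_subset[OF Gc]) auto
    ultimately obtain xs where xs: "0 \<le> xs" "xs \<le> c" "xs - G xs = 0"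
      using IVT'[of "\<lambda>x. x - G x" 0 0 c] c0 by auto
    define p where "p = (\<lambda>j. iterF F (Suc j) xs)"
    define r where "r = (\<lambda>j. Rr j (a j (p ((j + n - 1) mod n))))"
    have pp: "p ((j + n - 1) mod n) = iterF F j xs" if "j < n" for j
    proof (cases "j = 0")
      case True
      have sn: "Suc (n - 1) = n" using n1 by simp
      have "p (n - 1) = iterF F n xs" unfolding p_def sn ..
      also have "\<dots> = xs" using xs(3) by (simp add: G_def)
      finally show ?thesis using pred[OF that] True by simp
    next
      case False
      hence "Suc (j - 1) = j" by simp
      hence "p (j - 1) = iterF F j xs" unfolding p_def by metis
      then show ?thesis using pred[OF that] False by simp
    qed
    have inn: "0 \<le> iterF F j xs" if "j \<le> n" for j using IT[OF that] xs by auto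
    have "repressilator_steady_state n a dr k dp r p"
      unfolding repressilator_steady_state_def
    proof (intro allI impI)
      fix i assume i: "i < n"
      have pi: "p i = F i (iterF F i xs)" by (simp add: p_def)
      have nn: "0 \<le> iterF F i xs" using inn i by simp
      have ri: "r i = Rr i (a i (iterF F i xs))" using pp[OF i] by (simp add: r_def)
      show "0 < r i \<and> 0 < p i \<and> a i (p ((i + n - 1) mod n)) - dr i (r i) = 0 \<and>
            k i (r i) - dp i (p i) = 0"
        using Fsol[OF i nn] Fpos[OF i nn] pi ri pp[OF i] by simp
    qed
    thus ?thesis by blast
  qed
  have determ: "\<forall>j<n. p j = iterF F (Suc j) (p (n - 1)) \<and> r j = Rr j (a j (p ((j + n - 1) mod n)))"
    if ss: "repressilator_steady_state n a dr k dp r p" for r p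
  proof -
    have step: "r j = Rr j (a j (p ((j + n - 1) mod n))) \<and> p j = F j (p ((j + n - 1) mod n))"
      if j: "j < n" for j
    proof -
      have "(j + n - 1) mod n < n" using n1 by simp
      hence pos: "0 < p ((j + n - 1) mod n)" using ss unfolding repressilator_steady_state_def by blast
      have e: "0 < r j" "0 < p j" "dr j (r j) = a j (p ((j + n - 1) mod n))" "dp j (p j) = k j (r j)"
        using ss j unfolding repressilator_steady_state_def by auto
      show ?thesis using Funiq[OF j _ e(1) e(2) e(3) e(4)] pos by simp
    qed
    have "p j = iterF F (Suc j) (p (n - 1))" if "j < n" for j
      using that
    proof (induction j)
      case 0
      then show ?case using step[OF 0] pred[OF 0] by simp
    next
      case (Suc j)
      then show ?case using step[OF Suc(2)] pred[OF Suc(2)] by simp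
    qed
    thus ?thesis using step by blast
  qed
  have un: "\<forall>i<n. r i = r' i \<and> p i = p' i"
    if ss1: "repressilator_steady_state n a dr k dp r p"
      and ss2: "repressilator_steady_state n a dr k dp r' p'" for r p r' p'
  proof -
    note d1 = determ[OF ss1] and d2 = determ[OF ss2]
    have nn: "n - 1 < n" using n1 by simp
    have f1: "G (p (n - 1)) = p (n - 1)"
      using spec[OF d1, of "n - 1"] nn n1 unfolding G_def by (metis Suc_diff_1 less_le_trans zero_less_one)
    have f2: "G (p' (n - 1)) = p' (n - 1)"
      using spec[OF d2, of "n - 1"] nn n1 unfolding G_def by (metis Suc_diff_1 less_le_trans zero_less_one)
    have "0 < p (n - 1)" "0 < p' (n - 1)" using ss1 ss2 nn
      unfolding repressilator_steady_state_def by blast+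
    hence eq: "p (n - 1) = p' (n - 1)" using Gfix_uniq f1 f2 by simp
    have pe: "p j = p' j" if "j < n" for j
    proof -
      have "p j = iterF F (Suc j) (p (n - 1))" "p' j = iterF F (Suc j) (p' (n - 1))"
        using d1 d2 that by blast+
      thus ?thesis using eq by simp
    qed
    show ?thesis
    proof (intro allI impI)
      fix i assume i: "i < n"
      have "(i + n - 1) mod n < n" using n1 by simp
      hence "p ((i + n - 1) mod n) = p' ((i + n - 1) mod n)" using pe by blast
      moreover have "r i = Rr i (a i (p ((i + n - 1) mod n)))" "r' i = Rr i (a i (p' ((i + n - 1) mod n)))"
        using d1 d2 i by blast+
      ultimately show "r i = r' i \<and> p i = p' i" using pe[OF i] by simp
    qed
  qed
  show ?thesis using ex un by blast
qed

end
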